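(* For each $i\in\{1,2\}$ let $s_i\in\mathbb{S}^1\subset\mathbb{R}^2$, $t_i\ge0$ and $w_i=(s_it_i,0)\in\mathbb{R}^3$. Then \[d_{\mathbb{H}}(w_1,w_2)\simeq|t_1-t_2|+(t_1\wedge t_2)|s_1-s_2|^{1/2},\] with universal implicit constants.
   Context: For $w=(x,y,z)$, $w'=(x',y',z')$, $d_{\mathbb{H}}(w,w')=|x-x'|+|y-y'|+|z-z'+\tfrac12(xy'-x'y)|^{1/2}$. $t_1\wedge t_2=\min\{t_1,t_2\}$. $a\simeq b$ means $C^{-1}b\le a\le Cb$ for a universal constant $C$. *)

theory Defs
  imports "HOL-Analysis.Analysis"
begin

definition dH :: "real \<times> real \<times> real \<Rightarrow> real \<times> real \<times> real \<Rightarrow> real" where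
  "dH w w' = (case w of (x, y, z) \<Rightarrow> case w' of (x', y', z') \<Rightarrow>
     \<bar>x - x'\<bar> + \<bar>y - y'\<bar> + sqrt \<bar>z - z' + (1/2) * (x * y' - x' * y)\<bar>)"

definition lift :: "real \<times> real \<Rightarrow> real \<Rightarrow> real \<times> real \<times> real" where
  "lift s t = (fst s * t, snd s * t, 0)"

end

theory Submission
  imports Defs
begin

lemma core:
  fixes a b c e t1 t2 :: real
  assumes n1: "a^2+b^2=1" and n2: "c^2+e^2=1" and t1: "0 \<le> t1" and t12: "t1 \<le> t2"
  defines "D \<equiv> sqrt ((a-c)^2+(b-e)^2)"
  defines "X \<equiv> \<bar>a*t1 - c*t2\<bar> + \<bar>b*t1 - e*t2\<bar> + sqrt \<bar>(1/2)*(t1*t2*(a*e-c*b))\<bar>"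
  defines "R \<equiv> (t2 - t1) + t1 * sqrt D"
  shows "R/4 \<le> X \<and> X \<le> 4*R"
proof -
  define u where "u = a*t1 - c*t2"
  define v where "v = b*t1 - e*t2"
  define P where "P = a*c+b*e"
  define K where "K = a*e-c*b"
  define E where "E = sqrt (u^2+v^2)"
  define H where "H = \<bar>u\<bar> + \<bar>v\<bar>"
  define V where "V = sqrt (t1*t2*\<bar>K\<bar>/2)"
  have D0: "D \<ge> 0" unfolding D_def by simp
  have DD0: "D^2 = (a-c)^2+(b-e)^2" unfolding D_def by simp
  have DD: "D^2 = 2 - 2*P" unfolding DD0 P_def using n1 n2 by (simp add: power2_eq_square algebra_simps)
  have KP: "K^2 + P^2 = 1"
  proof -
    have "K^2 + P^2 = (a^2+b^2)*(c^2+e^2)" unfolding K_def P_def by (simp add: power2_eq_square algebra_simps)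
    thus ?thesis using n1 n2 by simp
  qed
  have D2: "D \<le> 2"
  proof -
    have "P^2 \<le> 1^2" using KP by (smt (verit) zero_le_power2 one_power2)
    hence "\<bar>P\<bar> \<le> \<bar>1\<bar>" using abs_le_square_iff by blast
    hence "P \<ge> -1" by simp
    hence "D^2 \<le> 2^2" using DD by simp
    thus ?thesis by (rule power2_le_imp_le) simp
  qed
  have uv: "u^2+v^2 = (t2-t1)^2 + t1*t2*D^2"
  proof -
    have "u^2+v^2 = (a^2+b^2)*t1^2 + (c^2+e^2)*t2^2 - 2*P*t1*t2" unfolding u_def v_def P_def by (simp add: power2_eq_square algebra_simps)
    also have "\<dots> = (t2-t1)^2 + t1*t2*(2-2*P)" using n1 n2 by (simp add: power2_eq_square algebra_simps)
    finally show ?thesis using DD by simp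
  qed
  have K2: "K^2 = D^2 * (1 - D^2/4)"
  proof -
    have Pd: "P = 1 - D^2/2" using DD by (simp add: field_simps)
    have "K^2 = 1 - P^2" using KP by simp
    thus ?thesis unfolding Pd by (simp add: power2_eq_square field_simps)
  qed
  have KD: "\<bar>K\<bar> \<le> D"
  proof -
    have "0 \<le> D^4/4" by simp
    moreover have "K^2 + D^4/4 = D^2" using K2 by (simp add: algebra_simps)
    ultimately have "K^2 \<le> D^2" by linarith
    thus ?thesis using D0 by (metis abs_le_square_iff abs_of_nonneg)
  qed
  have t20: "t2 \<ge> 0" using t1 t12 by simp
  have "\<bar>(1/2)*(t1*t2*(a*e-c*b))\<bar> = t1*t2*\<bar>K\<bar>/2" unfolding K_def using t1 t20
    by (simp add: abs_mult)
  hence XE: "X = H + V" unfolding X_def H_def V_def u_def v_def by simp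
  have EH: "E \<le> H"
  proof -
    have "u^2+v^2 \<le> H^2" unfolding H_def by (simp add: power2_eq_square algebra_simps abs_mult_self_eq)
    thus ?thesis unfolding E_def using H_def by (intro real_le_lsqrt) auto
  qed
  define s where "s = sqrt D"
  define p where "p = t2 - t1"
  define q where "q = t1 * s"
  have s0: "s \<ge> 0" unfolding s_def using D0 by simp
  have sD: "D = s^2" unfolding s_def using D0 by simp
  have s2: "s^2 \<le> 2" using sD D2 by simp
  have n94: "(3/2::real)^2 = 9/4" by (simp add: power2_eq_square)
  have "s^2 \<le> (3/2)^2" using s2 n94 by linarith
  hence s32: "s \<le> 3/2" by (rule power2_le_imp_le) simp
  have s15: "s \<le> 2" using s32 by simp
  have s3: "s^3 \<le> 3" proof -
    have "s^3 = s * s^2" by (simp add: power3_eq_cube power2_eq_square)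
    also have "\<dots> \<le> (3/2) * 2" using s32 s2 s0 by (intro mult_mono) auto
    finally show ?thesis by simp
  qed
  have p0: "p \<ge> 0" unfolding p_def using t12 by simp
  have q0: "q \<ge> 0" unfolding q_def using t1 s0 by simp
  have t2e: "t2 = t1 + p" unfolding p_def by simp
  have RR: "R = p + q" unfolding R_def p_def q_def s_def by simp
  have "E^2 = u^2+v^2" unfolding E_def by simp
  hence EE: "E^2 = p^2 + t1*t2*D^2" using uv p_def by simp
  have E0: "E \<ge> 0" unfolding E_def by simp
  have H0: "H \<ge> 0" unfolding H_def by simp
  have tK: "0 \<le> t1*t2*\<bar>K\<bar>" using t1 t20 by (intro mult_nonneg_nonneg) auto
  hence V0: "V \<ge> 0" unfolding V_def by simp
  from tK have VV: "V^2 = t1*t2*\<bar>K\<bar>/2" unfolding V_def by simp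
  have HH: "H^2 \<le> 2*E^2"
  proof -
    have "0 \<le> (\<bar>u\<bar>-\<bar>v\<bar>)^2" by simp
    hence "H^2 \<le> 2*(\<bar>u\<bar>^2+\<bar>v\<bar>^2)" unfolding H_def by (simp add: power2_eq_square algebra_simps)
    hence "H^2 \<le> 2*(u^2+v^2)" by simp
    thus ?thesis unfolding E_def by simp
  qed
  have tD: "t1*t2*D^2 \<le> 2*q^2 + 3*(p*q)"
  proof -
    have "t1*t2*D^2 = q^2 * s^2 + p*q * s^3" unfolding t2e sD q_def by (simp add: power2_eq_square power3_eq_cube algebra_simps)
    also have "\<dots> \<le> q^2*2 + p*q*3" using s2 s3 p0 q0 by (intro add_mono mult_left_mono) auto
    finally show ?thesis by (simp add: algebra_simps)
  qed
  have pq0: "0 \<le> p*q" using p0 q0 by simp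
  have R2: "R^2 = p^2 + q^2 + 2*(p*q)" unfolding RR by (simp add: power2_eq_square algebra_simps)
  have R0: "0 \<le> R" using RR p0 q0 by simp
  have Hup: "H \<le> 2*R"
  proof -
    have "H^2 \<le> 4*R^2" using HH EE tD R2 pq0 zero_le_power2[of p] by linarith
    hence "H^2 \<le> (2*R)^2" by (simp add: power_mult_distrib)
    thus ?thesis by (rule power2_le_imp_le) (use R0 in linarith)
  qed
  have Vup: "V \<le> R"
  proof -
    have a1: "t1*t2*\<bar>K\<bar> \<le> t1*t2*D" using KD t1 t20 by (intro mult_left_mono) auto
    have a2: "t1*t2*D = q^2 + p*q * s" unfolding t2e sD q_def by (simp add: power2_eq_square algebra_simps)
    have "p*q * s \<le> p*q*2" using s15 pq0 by (intro mult_left_mono) auto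
    hence a3: "p*q * s \<le> 2*(p*q)" by simp
    have "V^2 \<le> R^2" using VV a1 a2 a3 R2 pq0 zero_le_power2[of p] zero_le_power2[of q] by linarith
    thus ?thesis by (rule power2_le_imp_le) (use R0 in linarith)
  qed
  have tDD0: "0 \<le> t1*t2*D^2" using t1 t20 by simp
  have low1: "p \<le> E"
  proof -
    have "p^2 \<le> E^2" using EE tDD0 by simp
    thus ?thesis by (rule power2_le_imp_le) (use E0 in simp)
  qed
  have low2: "q \<le> 2*X"
  proof (cases "D \<le> 1")
    case True
    have D21: "D^2 \<le> 1" using True D0 by (simp add: power_le_one)
    have "0 \<le> D^2 * (3/4 - D^2/4)" using D21 by (intro mult_nonneg_nonneg) auto
    hence "(D/2)^2 \<le> K^2" using K2 by (simp add: power2_eq_square algebra_simps)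
    hence "(D/2)^2 \<le> \<bar>K\<bar>^2" by simp
    hence Kb: "D/2 \<le> \<bar>K\<bar>" by (rule power2_le_imp_le) simp
    have b1: "t1*t1*(D/2) \<le> t1*t2*\<bar>K\<bar>" using Kb t12 t1 D0 by (intro mult_mono) (auto intro: mult_left_mono)
    have "(q/2)^2 = t1*t1*(D/2)/2" unfolding q_def sD by (simp add: power2_eq_square algebra_simps)
    hence "(q/2)^2 \<le> V^2" using VV b1 by simp
    hence "q/2 \<le> V" by (rule power2_le_imp_le) (use V0 in simp)
    then show ?thesis using XE H0 by simp
  next
    case False
    have "D \<le> D*D" using False by (simp add: mult_le_cancel_left1)
    hence "s \<le> D" unfolding s_def using D0 by (intro real_le_lsqrt) (auto simp: power2_eq_square)
    hence c1: "q \<le> t1 * D" unfolding q_def using t1 by (simp add: mult_left_mono)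
    have "t1*t1*D^2 \<le> t1*t2*D^2" using t1 t12 by (intro mult_right_mono mult_left_mono) auto
    moreover have "(t1*D)^2 = t1*t1*D^2" by (simp add: power2_eq_square)
    ultimately have "(t1*D)^2 \<le> E^2" using EE zero_le_power2[of p] by linarith
    hence "t1 * D \<le> E" by (rule power2_le_imp_le) (use E0 in simp)
    then show ?thesis using c1 EH XE V0 H0 by simp
  qed
  show ?thesis using low1 low2 Hup Vup RR XE EH V0 H0 by simp
qed

lemma core2:
  fixes a b c e t1 t2 :: real
  assumes n1: "a^2+b^2=1" and n2: "c^2+e^2=1" and t1: "0 \<le> t1" and t2: "0 \<le> t2"
  shows "(\<bar>t1-t2\<bar> + min t1 t2 * sqrt (sqrt ((a-c)^2+(b-e)^2)))/4 \<le>
      \<bar>a*t1 - c*t2\<bar> + \<bar>b*t1 - e*t2\<bar> + sqrt \<bar>(1/2)*(t1*t2*(a*e-c*b))\<bar> \<and>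
    \<bar>a*t1 - c*t2\<bar> + \<bar>b*t1 - e*t2\<bar> + sqrt \<bar>(1/2)*(t1*t2*(a*e-c*b))\<bar> \<le>
     4 * (\<bar>t1-t2\<bar> + min t1 t2 * sqrt (sqrt ((a-c)^2+(b-e)^2)))"
proof (cases "t1 \<le> t2")
  case True
  then show ?thesis using core[OF n1 n2 t1 True] by (simp add: min_def)
next
  case False
  have h: "t2 \<le> t1" using False by simp
  have e1: "\<bar>c*t2 - a*t1\<bar> = \<bar>a*t1 - c*t2\<bar>" by (rule abs_minus_commute)
  have e2: "\<bar>e*t2 - b*t1\<bar> = \<bar>b*t1 - e*t2\<bar>" by (rule abs_minus_commute)
  have e3: "\<bar>(1/2)*(t2*t1*(c*b - a*e))\<bar> = \<bar>(1/2)*(t1*t2*(a*e-c*b))\<bar>"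
  proof -
    have "(1/2)*(t2*t1*(c*b - a*e)) = - ((1/2)*(t1*t2*(a*e-c*b)))" by (simp add: algebra_simps)
    thus ?thesis by (simp only: abs_minus_cancel)
  qed
  have e4: "(c-a)^2+(e-b)^2 = (a-c)^2+(b-e)^2" by (simp add: power2_commute)
  have e5: "\<bar>t1-t2\<bar> + min t1 t2 * sqrt (sqrt ((a-c)^2+(b-e)^2)) = (t1 - t2) + t2 * sqrt (sqrt ((c-a)^2+(e-b)^2))"
    using h e4 by (simp add: min_def)
  show ?thesis using core[OF n2 n1 t2 h] unfolding e1 e2 e3 e5 by simp
qed


lemma pair_sphere: "(s::real\<times>real) \<in> sphere 0 1 \<Longrightarrow> (fst s)^2 + (snd s)^2 = 1"
proof -
  assume "s \<in> sphere 0 1"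
  hence "norm s = 1" by simp
  hence "sqrt ((fst s)^2 + (snd s)^2) = 1" by (cases s) (simp add: norm_Pair)
  thus ?thesis by simp
qed

theorem lemma3p3:
  "\<exists>C>0. \<forall>(s1::real \<times> real) s2 (t1::real) t2.
      s1 \<in> sphere 0 1 \<longrightarrow> s2 \<in> sphere 0 1 \<longrightarrow> t1 \<ge> 0 \<longrightarrow> t2 \<ge> 0 \<longrightarrow>
      (let R = \<bar>t1 - t2\<bar> + min t1 t2 * sqrt (norm (s1 - s2)) in
         R / C \<le> dH (lift s1 t1) (lift s2 t2) \<and> dH (lift s1 t1) (lift s2 t2) \<le> C * R)"
proof (intro exI[of _ 4] conjI allI impI)
  fix s1 s2 :: "real \<times> real" and t1 t2 :: real
  assume h1: "s1 \<in> sphere 0 1" and h2: "s2 \<in> sphere 0 1" and t1: "t1 \<ge> 0" and t2: "t2 \<ge> 0"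
  obtain a b where s1: "s1 = (a,b)" by (cases s1)
  obtain c e where s2: "s2 = (c,e)" by (cases s2)
  have n1: "a^2+b^2 = 1" using pair_sphere[OF h1] s1 by simp
  have n2: "c^2+e^2 = 1" using pair_sphere[OF h2] s2 by simp
  have nm: "norm (s1 - s2) = sqrt ((a-c)^2+(b-e)^2)" unfolding s1 s2 by (simp add: norm_Pair)
  have zz: "0 - 0 + 1/2 * (a*t1*(e*t2) - c*t2*(b*t1)) = (1/2)*(t1*t2*(a*e-c*b))" by (simp add: algebra_simps)
  have dd: "dH (lift s1 t1) (lift s2 t2) = \<bar>a*t1 - c*t2\<bar> + \<bar>b*t1 - e*t2\<bar> + sqrt \<bar>(1/2)*(t1*t2*(a*e-c*b))\<bar>"
    unfolding s1 s2 dH_def lift_def by (simp only: fst_conv snd_conv prod.case zz)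
  show "let R = \<bar>t1 - t2\<bar> + min t1 t2 * sqrt (norm (s1 - s2)) in
         R / 4 \<le> dH (lift s1 t1) (lift s2 t2) \<and> dH (lift s1 t1) (lift s2 t2) \<le> 4 * R"
    unfolding Let_def dd nm using core2[OF n1 n2 t1 t2] by simp
qed simp

end
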